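(* Let $Q\in\mathbb{R}^{n\times n}$ be symmetric positive definite, $\|x\|=\sqrt{x^TQx}$, $\|u\|_*=\sqrt{u^TQ^{-1}u}$. Let $f\colon\mathbb{R}^n\to\mathbb{R}$ be convex and differentiable with $\|\nabla f(x)-\nabla f(y)\|_*\le L\|x-y\|$ for all $x,y$, with a minimizer $x_\star$, $f_\star=f(x_\star)$. Let $0<t\le1$, and let $\{\theta_k\}_{k=0}^\infty$ be positive with $\theta_0=1$ and $0\le\theta_{k+1}^2-\theta_{k+1}\le\theta_k^2$ for $k\ge0$. Given $x_0$, let $z_0=x_0$ and for $k\ge0$ \[ y_{k+1}=x_k-\tfrac1LQ^{-1}\nabla f(x_k),\quad z_{k+1}=z_k-\tfrac{2t\theta_k}{L}Q^{-1}\nabla f(x_k),\quad x_{k+1}=\Big(1-\tfrac1{\theta_{k+1}}\Big)y_{k+1}+\tfrac1{\theta_{k+1}}z_{k+1}. \] Then for $k=1,2,\dots$, \[ f(y_k)-f_\star\le\frac{L\|x_0-x_\star\|^2}{4t\theta_{k-1}^2}. \]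
   Context: For $t=1/2$ this is Nesterov's accelerated gradient method and for $t=1$ it is OGM (when $Q=I$). *)

theory Defs
  imports "HOL-Analysis.Analysis"
begin

definition qnorm :: "real^'n^'n \<Rightarrow> real^'n \<Rightarrow> real" where
  "qnorm Q x = sqrt (x \<bullet> (Q *v x))"

definition qdnorm :: "real^'n^'n \<Rightarrow> real^'n \<Rightarrow> real" where
  "qdnorm Q u = sqrt (u \<bullet> (matrix_inv Q *v u))"

end

theory Submission
  imports Defs
begin

lemma Q_sym_dot:
  fixes Q :: "real^'n^'n"
  assumes "transpose Q = Q"
  shows "a \<bullet> (Q *v b) = b \<bullet> (Q *v a)"
proof -
  have "a \<bullet> (Q *v b) = (a v* Q) \<bullet> b" by (simp add: dot_lmul_matrix)
  also have "a v* Q = Q *v a" by (metis assms vector_transpose_matrix)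
  finally show ?thesis by (simp add: inner_commute)
qed

lemma Q_inv:
  fixes Q :: "real^'n^'n"
  assumes pd: "\<forall>v. v \<noteq> 0 \<longrightarrow> v \<bullet> (Q *v v) > 0"
  shows "Q ** matrix_inv Q = mat 1 \<and> matrix_inv Q ** Q = mat 1"
proof -
  have "\<forall>x. Q *v x = 0 \<longrightarrow> x = 0" using pd by force
  then have "\<exists>B. B ** Q = mat 1" using matrix_left_invertible_ker by blast
  then have "invertible Q" using invertible_left_inverse by blast
  then have "\<exists>A'. Q ** A' = mat 1 \<and> A' ** Q = mat 1" unfolding invertible_def .
  then show ?thesis unfolding matrix_inv_def by (rule someI_ex)
qed

lemma Q_inv_vec:
  fixes Q :: "real^'n^'n"
  assumes pd: "\<forall>v. v \<noteq> 0 \<longrightarrow> v \<bullet> (Q *v v) > 0"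
  shows "Q *v (matrix_inv Q *v u) = u" "matrix_inv Q *v (Q *v u) = u"
  using Q_inv[OF pd] by (simp_all add: matrix_vector_mul_assoc)

lemma P_sym_dot:
  fixes Q :: "real^'n^'n"
  assumes sym: "transpose Q = Q" and pd: "\<forall>v. v \<noteq> 0 \<longrightarrow> v \<bullet> (Q *v v) > 0"
  shows "a \<bullet> (matrix_inv Q *v b) = b \<bullet> (matrix_inv Q *v a)"
proof -
  let ?P = "matrix_inv Q"
  have "a \<bullet> (?P *v b) = (Q *v (?P *v a)) \<bullet> (?P *v b)" by (simp add: Q_inv_vec[OF pd])
  also have "\<dots> = (?P *v a) \<bullet> (Q *v (?P *v b))"
    using Q_sym_dot[OF sym] by (simp add: inner_commute)
  also have "\<dots> = b \<bullet> (?P *v a)" by (simp add: Q_inv_vec[OF pd] inner_commute)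
  finally show ?thesis .
qed

lemma Q_nonneg:
  fixes Q :: "real^'n^'n"
  assumes pd: "\<forall>v. v \<noteq> 0 \<longrightarrow> v \<bullet> (Q *v v) > 0"
  shows "v \<bullet> (Q *v v) \<ge> 0"
  using pd by (cases "v = 0") (auto intro: less_imp_le)

lemma P_as_Q:
  fixes Q :: "real^'n^'n"
  assumes sym: "transpose Q = Q" and pd: "\<forall>v. v \<noteq> 0 \<longrightarrow> v \<bullet> (Q *v v) > 0"
  shows "u \<bullet> (matrix_inv Q *v u) = (matrix_inv Q *v u) \<bullet> (Q *v (matrix_inv Q *v u))"
  by (simp add: Q_inv_vec[OF pd] inner_commute)

lemma P_nonneg:
  fixes Q :: "real^'n^'n"
  assumes sym: "transpose Q = Q" and pd: "\<forall>v. v \<noteq> 0 \<longrightarrow> v \<bullet> (Q *v v) > 0"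
  shows "u \<bullet> (matrix_inv Q *v u) \<ge> 0"
  using P_as_Q[OF sym pd] Q_nonneg[OF pd] by metis

lemma P_zero:
  fixes Q :: "real^'n^'n"
  assumes sym: "transpose Q = Q" and pd: "\<forall>v. v \<noteq> 0 \<longrightarrow> v \<bullet> (Q *v v) > 0"
    and "u \<bullet> (matrix_inv Q *v u) \<le> 0"
  shows "u = 0"
proof (rule ccontr)
  assume "u \<noteq> 0"
  then have "matrix_inv Q *v u \<noteq> 0" using Q_inv_vec(1)[OF pd, of u] by auto
  then have "(matrix_inv Q *v u) \<bullet> (Q *v (matrix_inv Q *v u)) > 0" using pd by blast
  then show False using assms(3) P_as_Q[OF sym pd, of u] by linarith
qed

lemma Q_CS:
  fixes Q :: "real^'n^'n"
  assumes sym: "transpose Q = Q" and pd: "\<forall>v. v \<noteq> 0 \<longrightarrow> v \<bullet> (Q *v v) > 0"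
  shows "(h \<bullet> (Q *v w))\<^sup>2 \<le> (h \<bullet> (Q *v h)) * (w \<bullet> (Q *v w))"
proof (cases "h = 0")
  case True then show ?thesis by simp
next
  case False
  let ?a = "h \<bullet> (Q *v h)" and ?b = "h \<bullet> (Q *v w)" and ?c = "w \<bullet> (Q *v w)"
  have a: "?a > 0" using pd False by blast
  define l where "l = ?b / ?a"
  have "0 \<le> (w - l *\<^sub>R h) \<bullet> (Q *v (w - l *\<^sub>R h))" by (rule Q_nonneg[OF pd])
  also have "\<dots> = ?c - 2 * l * ?b + l\<^sup>2 * ?a"
    using Q_sym_dot[OF sym, of w h]
    by (simp add: algebra_simps inner_diff_left inner_diff_right power2_eq_square)
  also have "\<dots> = ?c - ?b\<^sup>2 / ?a" using a unfolding l_def by (simp add: field_simps power2_eq_square)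
  finally have "?b\<^sup>2 / ?a \<le> ?c" by simp
  then show ?thesis using a by (simp add: field_simps mult.commute)
qed

lemma dual_CS:
  fixes Q :: "real^'n^'n"
  assumes sym: "transpose Q = Q" and pd: "\<forall>v. v \<noteq> 0 \<longrightarrow> v \<bullet> (Q *v v) > 0"
  shows "u \<bullet> h \<le> qdnorm Q u * qnorm Q h"
proof -
  let ?w = "matrix_inv Q *v u"
  have u: "u = Q *v ?w" by (simp add: Q_inv_vec[OF pd])
  have "u \<bullet> h = h \<bullet> (Q *v ?w)" by (subst u) (simp add: inner_commute)
  also have "\<dots> \<le> sqrt ((h \<bullet> (Q *v h)) * (?w \<bullet> (Q *v ?w)))"
    using Q_CS[OF sym pd, of h ?w] real_le_rsqrt by blast
  also have "\<dots> = qdnorm Q u * qnorm Q h"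
    unfolding qdnorm_def qnorm_def P_as_Q[OF sym pd, of u] by (simp add: real_sqrt_mult mult.commute)
  finally show ?thesis .
qed

lemma grad_ineq:
  fixes F :: "real^'n \<Rightarrow> real" and G :: "real^'n \<Rightarrow> real^'n"
  assumes cvx: "convex_on UNIV F"
    and grad: "\<forall>u. (F has_derivative (\<lambda>h. G u \<bullet> h)) (at u)"
  shows "F u \<ge> F b + G b \<bullet> (u - b)"
proof -
  let ?d = "u - b"
  define \<psi> where "\<psi> s = F (b + s *\<^sub>R ?d)" for s :: real
  have c: "convex_on UNIV \<psi>"
    unfolding convex_on_def
  proof (intro conjI ballI allI impI)
    fix x y a c :: real assume ac: "0 \<le> a" "0 \<le> c" "a + c = 1"
    have "b + (a *\<^sub>R x + c *\<^sub>R y) *\<^sub>R ?d = a *\<^sub>R (b + x *\<^sub>R ?d) + c *\<^sub>R (b + y *\<^sub>R ?d)"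
    proof -
      have c1: "c = 1 - a" using ac by simp
      show ?thesis unfolding c1 by (simp add: algebra_simps)
    qed
    then show "\<psi> (a *\<^sub>R x + c *\<^sub>R y) \<le> a * \<psi> x + c * \<psi> y"
      unfolding \<psi>_def using cvx ac unfolding convex_on_def by simp
  qed simp
  have "((\<lambda>s. b + s *\<^sub>R ?d) has_derivative (\<lambda>s. s *\<^sub>R ?d)) (at 0)"
    by (auto intro!: derivative_eq_intros)
  then have "((\<lambda>s. F (b + s *\<^sub>R ?d)) has_derivative (\<lambda>s. G (b + 0 *\<^sub>R ?d) \<bullet> (s *\<^sub>R ?d))) (at 0)"
    using has_derivative_compose grad by blast
  then have d: "(\<psi> has_field_derivative (G b \<bullet> ?d)) (at 0)"
    unfolding \<psi>_def by (rule has_derivative_imp_has_field_derivative) simp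
  have "\<psi> 1 - \<psi> 0 \<ge> (G b \<bullet> ?d) * (1 - 0)"
    by (rule convex_on_imp_above_tangent[OF c]) (use d in auto)
  then show ?thesis unfolding \<psi>_def by simp
qed

lemma descent:
  fixes Q :: "real^'n^'n" and F :: "real^'n \<Rightarrow> real" and G :: "real^'n \<Rightarrow> real^'n"
  assumes sym: "transpose Q = Q" and pd: "\<forall>v. v \<noteq> 0 \<longrightarrow> v \<bullet> (Q *v v) > 0"
    and grad: "\<forall>u. (F has_derivative (\<lambda>h. G u \<bullet> h)) (at u)"
    and L: "L > 0"
    and lip: "\<forall>u v. qdnorm Q (G u - G v) \<le> L * qnorm Q (u - v)"
  shows "F (b + h) \<le> F b + G b \<bullet> h + L / 2 * (h \<bullet> (Q *v h))"
proof -
  let ?q = "h \<bullet> (Q *v h)"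
  define \<phi> where "\<phi> s = F (b + s *\<^sub>R h) - s * (G b \<bullet> h) - L / 2 * s\<^sup>2 * ?q" for s :: real
  have der: "(\<phi> has_field_derivative (G (b + s *\<^sub>R h) \<bullet> h - G b \<bullet> h - L * s * ?q)) (at s)" for s
  proof -
    have "((\<lambda>s. b + s *\<^sub>R h) has_derivative (\<lambda>s. s *\<^sub>R h)) (at s)"
      by (auto intro!: derivative_eq_intros)
    then have "((\<lambda>s. F (b + s *\<^sub>R h)) has_derivative (\<lambda>r. G (b + s *\<^sub>R h) \<bullet> (r *\<^sub>R h))) (at s)"
      using has_derivative_compose grad by blast
    then have d1: "((\<lambda>s. F (b + s *\<^sub>R h)) has_field_derivative (G (b + s *\<^sub>R h) \<bullet> h)) (at s)"
      by (rule has_derivative_imp_has_field_derivative) simp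
    show ?thesis unfolding \<phi>_def
      by (rule derivative_eq_intros d1 | simp)+
  qed
  have qn: "qnorm Q (s *\<^sub>R h) = s * qnorm Q h" if "s \<ge> 0" for s
    unfolding qnorm_def using that
    by (simp add: matrix_vector_mult_scaleR real_sqrt_mult power2_eq_square[symmetric])
  have qq: "qnorm Q h * qnorm Q h = ?q"
    unfolding qnorm_def using Q_nonneg[OF pd, of h] by simp
  have qn0: "qnorm Q h \<ge> 0" unfolding qnorm_def using Q_nonneg[OF pd, of h] by simp
  have "\<phi> 0 \<ge> \<phi> 1"
  proof (rule DERIV_nonpos_imp_nonincreasing[of 0 1 \<phi>])
    fix s :: real assume s: "0 \<le> s" "s \<le> 1"
    have "(G (b + s *\<^sub>R h) - G b) \<bullet> h \<le> qdnorm Q (G (b + s *\<^sub>R h) - G b) * qnorm Q h"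
      by (rule dual_CS[OF sym pd])
    also have "\<dots> \<le> L * qnorm Q ((b + s *\<^sub>R h) - b) * qnorm Q h"
      using lip qn0 mult_right_mono by blast
    also have "\<dots> = L * s * ?q" using qn[OF s(1)] qq by simp
    finally have "G (b + s *\<^sub>R h) \<bullet> h - G b \<bullet> h - L * s * ?q \<le> 0"
      by (simp add: inner_diff_left)
    then show "\<exists>y. (\<phi> has_real_derivative y) (at s) \<and> y \<le> 0" using der by blast
  qed simp
  then show ?thesis unfolding \<phi>_def by simp
qed


lemma mv_neg: "(A::real^'n^'m) *v (- x) = - (A *v x)"
  by (metis add.inverse_inverse diff_0 matrix_vector_mult_0_right matrix_vector_mult_diff_distrib)

lemma coco:
  fixes Q :: "real^'n^'n" and F :: "real^'n \<Rightarrow> real" and G :: "real^'n \<Rightarrow> real^'n"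
  assumes sym: "transpose Q = Q" and pd: "\<forall>v. v \<noteq> 0 \<longrightarrow> v \<bullet> (Q *v v) > 0"
    and cvx: "convex_on UNIV F"
    and grad: "\<forall>u. (F has_derivative (\<lambda>h. G u \<bullet> h)) (at u)"
    and L: "L > 0"
    and lip: "\<forall>u v. qdnorm Q (G u - G v) \<le> L * qnorm Q (u - v)"
  shows "F a \<ge> F b + G b \<bullet> (a - b) + ((G a - G b) \<bullet> (matrix_inv Q *v (G a - G b))) / (2 * L)"
proof -
  let ?P = "matrix_inv Q"
  define \<phi> where "\<phi> u = F u - G b \<bullet> u" for u
  define r where "r = G a - G b"
  define h where "h = (- 1 / L) *\<^sub>R (?P *v r)"
  let ?D = "r \<bullet> (?P *v r)"
  have g2: "\<forall>u. (\<phi> has_derivative (\<lambda>h. (G u - G b) \<bullet> h)) (at u)"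
  proof
    fix u
    have "(\<phi> has_derivative (\<lambda>h. G u \<bullet> h - G b \<bullet> h)) (at u)"
      unfolding \<phi>_def using grad by (auto intro!: derivative_eq_intros)
    then show "(\<phi> has_derivative (\<lambda>h. (G u - G b) \<bullet> h)) (at u)"
      by (simp add: inner_diff_left)
  qed
  have l2: "\<forall>u v. qdnorm Q ((G u - G b) - (G v - G b)) \<le> L * qnorm Q (u - v)"
    using lip by simp
  have d: "\<phi> (a + h) \<le> \<phi> a + (G a - G b) \<bullet> h + L / 2 * (h \<bullet> (Q *v h))"
    by (rule descent[OF sym pd g2 L l2])
  have rh: "(G a - G b) \<bullet> h = - ?D / L"
    unfolding h_def r_def by (simp add: inner_commute)
  have hh: "h \<bullet> (Q *v h) = ?D / L\<^sup>2"
    unfolding h_def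
    by (simp add: matrix_vector_mult_scaleR power2_eq_square mv_neg Q_inv_vec[OF pd] inner_commute)
  have gi: "F (a + h) \<ge> F b + G b \<bullet> (a + h - b)"
    by (rule grad_ineq[OF cvx grad])
  have "L / 2 * (?D / L\<^sup>2) = ?D / (2 * L)" using L by (simp add: field_simps power2_eq_square)
  moreover have "?D / L = 2 * (?D / (2 * L))" using L by simp
  ultimately have "\<phi> (a + h) \<le> \<phi> a - ?D / (2 * L)" using d unfolding rh hh by linarith
  then show ?thesis using gi unfolding \<phi>_def r_def
    by (simp add: inner_diff_right inner_add_right)
qed


lemma arith_step:
  fixes L t th th' A B p Dg Dg' fx fx' fs N R :: real
  assumes L: "L > 0" and t: "t > 0" "t \<le> 1" and th: "th \<ge> 1" and thr: "th\<^sup>2 - th \<le> th'\<^sup>2"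
    and Sm: "fx' - fs - Dg' / (2 * L) \<ge> 0" and Dg: "Dg \<ge> 0"
    and F1: "fs \<ge> fx - A + Dg / (2 * L)"
    and F2: "fx' \<ge> fx + B + (Dg' - 2 * p + Dg) / (2 * L)"
    and IH: "th'\<^sup>2 * (fx' - fs - Dg' / (2 * L)) + L / (4 * t) * N \<le> L / (4 * t) * R"
  shows "th\<^sup>2 * (fx - fs - Dg / (2 * L)) + (L / (4 * t) * N - th * (A + (th - 1) * (- B + p / L)) + t * th\<^sup>2 * Dg / L)
         \<le> L / (4 * t) * R"
proof -
  define Sm where "Sm = fx' - fs - Dg' / (2 * L)"
  define S where "S = fx - fs - Dg / (2 * L)"
  have h1: "Dg / L = 2 * (Dg / (2 * L))" using L by simp
  have h2: "(Dg' - 2 * p + Dg) / (2 * L) = Dg' / (2 * L) - p / L + Dg / (2 * L)"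
    using L by (simp add: field_simps)
  have e1: "- A \<le> - S - Dg / L" using F1 h1 unfolding S_def by linarith
  have e2: "B - p / L \<le> Sm - S - Dg / L" using F2 h1 h2 unfolding S_def Sm_def by linarith
  have m1: "th * (- A) \<le> th * (- S - Dg / L)" using e1 th by (intro mult_left_mono) auto
  have m2: "(th * (th - 1)) * (B - p / L) \<le> (th * (th - 1)) * (Sm - S - Dg / L)"
    using e2 th by (intro mult_left_mono) auto
  have m3: "(th\<^sup>2 - th) * Sm \<le> th'\<^sup>2 * Sm" using thr Sm unfolding Sm_def by (intro mult_right_mono) auto
  have m4: "(t - 1) * (th\<^sup>2 * Dg / L) \<le> 0" using t Dg L by (intro mult_nonpos_nonneg) auto
  have IH': "th'\<^sup>2 * Sm + L / (4 * t) * N \<le> L / (4 * t) * R" using IH unfolding Sm_def .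
  have eq: "th\<^sup>2 * S + (L / (4 * t) * N - th * (A + (th - 1) * (- B + p / L)) + t * th\<^sup>2 * Dg / L)
     = L / (4 * t) * N + th * (- A) + (th * (th - 1)) * (B - p / L) + th\<^sup>2 * S + t * th\<^sup>2 * Dg / L"
    using L by (simp add: field_simps power2_eq_square)
  have eq2: "th * (- S - Dg / L) + (th * (th - 1)) * (Sm - S - Dg / L) + th\<^sup>2 * S + t * th\<^sup>2 * Dg / L
     = (th\<^sup>2 - th) * Sm + (t - 1) * (th\<^sup>2 * Dg / L)"
    using L by (simp add: field_simps power2_eq_square)
  show ?thesis using eq eq2 m1 m2 m3 m4 IH' unfolding S_def[symmetric] by linarith
qed


lemma descent_step:
  fixes Q :: "real^'n^'n" and F :: "real^'n \<Rightarrow> real" and G :: "real^'n \<Rightarrow> real^'n"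
  assumes sym: "transpose Q = Q" and pd: "\<forall>v. v \<noteq> 0 \<longrightarrow> v \<bullet> (Q *v v) > 0"
    and grad: "\<forall>u. (F has_derivative (\<lambda>h. G u \<bullet> h)) (at u)"
    and L: "L > 0"
    and lip: "\<forall>u v. qdnorm Q (G u - G v) \<le> L * qnorm Q (u - v)"
  shows "F (b - (1 / L) *\<^sub>R (matrix_inv Q *v G b)) \<le> F b - (G b \<bullet> (matrix_inv Q *v G b)) / (2 * L)"
proof -
  let ?P = "matrix_inv Q"
  define r where "r = G b"
  define h where "h = (- 1 / L) *\<^sub>R (?P *v r)"
  let ?D = "r \<bullet> (?P *v r)"
  have d: "F (b + h) \<le> F b + G b \<bullet> h + L / 2 * (h \<bullet> (Q *v h))"
    by (rule descent[OF sym pd grad L lip])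
  have rh: "G b \<bullet> h = - (?D / L)"
    unfolding h_def r_def by (simp add: inner_commute)
  have hh: "h \<bullet> (Q *v h) = ?D / L\<^sup>2"
    unfolding h_def
    by (simp add: matrix_vector_mult_scaleR power2_eq_square mv_neg Q_inv_vec[OF pd] inner_commute)
  have "L / 2 * (?D / L\<^sup>2) = ?D / (2 * L)" using L by (simp add: field_simps power2_eq_square)
  moreover have "?D / L = 2 * (?D / (2 * L))" using L by simp
  moreover have "b + h = b - (1 / L) *\<^sub>R (matrix_inv Q *v G b)" unfolding h_def r_def
    by (simp add: algebra_simps)
  ultimately show ?thesis using d unfolding rh hh r_def by (metis (no_types) add.commute add_uminus_conv_diff diff_add_cancel le_diff_eq mult_2 add_diff_eq)
qed

lemma N_exp:
  fixes Q :: "real^'n^'n"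
  assumes sym: "transpose Q = Q" and pd: "\<forall>v. v \<noteq> 0 \<longrightarrow> v \<bullet> (Q *v v) > 0"
  shows "(v - c *\<^sub>R (matrix_inv Q *v u)) \<bullet> (Q *v (v - c *\<^sub>R (matrix_inv Q *v u)))
     = v \<bullet> (Q *v v) - 2 * c * (u \<bullet> v) + c\<^sup>2 * (u \<bullet> (matrix_inv Q *v u))"
proof -
  let ?w = "matrix_inv Q *v u"
  have "(v - c *\<^sub>R ?w) \<bullet> (Q *v (v - c *\<^sub>R ?w)) = v \<bullet> (Q *v v) - c * (?w \<bullet> (Q *v v)) - c * (v \<bullet> (Q *v ?w)) + c\<^sup>2 * (?w \<bullet> (Q *v ?w))"
    by (simp add: algebra_simps inner_diff_left inner_diff_right power2_eq_square)
  also have "?w \<bullet> (Q *v v) = v \<bullet> (Q *v ?w)" by (rule Q_sym_dot[OF sym])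
  also have "v \<bullet> (Q *v ?w) = u \<bullet> v" by (simp add: Q_inv_vec[OF pd] inner_commute)
  also have "?w \<bullet> (Q *v ?w) = u \<bullet> ?w" by (simp add: Q_inv_vec[OF pd] inner_commute)
  finally show ?thesis by simp
qed

theorem corollary5:
  fixes Q :: "real^'n^'n" and f :: "real^'n \<Rightarrow> real" and g :: "real^'n \<Rightarrow> real^'n"
    and L t :: real and xs :: "real^'n" and \<theta> :: "nat \<Rightarrow> real"
    and x y z :: "nat \<Rightarrow> real^'n"
  assumes Q_sym: "transpose Q = Q"
    and Q_pd: "\<forall>v. v \<noteq> 0 \<longrightarrow> v \<bullet> (Q *v v) > 0"
    and f_convex: "convex_on UNIV f"
    and f_grad: "\<forall>u. (f has_derivative (\<lambda>h. g u \<bullet> h)) (at u)"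
    and L_pos: "L > 0"
    and g_lip: "\<forall>u v. qdnorm Q (g u - g v) \<le> L * qnorm Q (u - v)"
    and xs_min: "\<forall>u. f xs \<le> f u"
    and t_pos: "0 < t" and t_le: "t \<le> 1"
    and \<theta>_pos: "\<forall>k. \<theta> k > 0"
    and \<theta>_0: "\<theta> 0 = 1"
    and \<theta>_rec: "\<forall>k. 0 \<le> (\<theta> (Suc k))\<^sup>2 - \<theta> (Suc k) \<and> (\<theta> (Suc k))\<^sup>2 - \<theta> (Suc k) \<le> (\<theta> k)\<^sup>2"
    and z_0: "z 0 = x 0"
    and y_step: "\<forall>k. y (Suc k) = x k - (1 / L) *\<^sub>R (matrix_inv Q *v g (x k))"
    and z_step: "\<forall>k. z (Suc k) = z k - (2 * t * \<theta> k / L) *\<^sub>R (matrix_inv Q *v g (x k))"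
    and x_step: "\<forall>k. x (Suc k) = (1 - 1 / \<theta> (Suc k)) *\<^sub>R y (Suc k) + (1 / \<theta> (Suc k)) *\<^sub>R z (Suc k)"
  shows "\<forall>k\<ge>1. f (y k) - f xs \<le> L * (qnorm Q (x 0 - xs))\<^sup>2 / (4 * t * (\<theta> (k - 1))\<^sup>2)"
proof -
  let ?P = "matrix_inv Q"
  define D where "D u = u \<bullet> (?P *v u)" for u
  define N where "N v = v \<bullet> (Q *v v)" for v
  define S where "S k = f (x k) - f xs - D (g (x k)) / (2 * L)" for k
  define c where "c = L / (4 * t)"
  define R where "R = N (x 0 - xs)"
  have Dnn: "D u \<ge> 0" for u unfolding D_def by (rule P_nonneg[OF Q_sym Q_pd])
  have Dneg: "D (- u) = D u" for u unfolding D_def by (simp add: mv_neg)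
  have desc: "f (y (Suc k)) \<le> f (x k) - D (g (x k)) / (2 * L)" for k
    using descent_step[OF Q_sym Q_pd f_grad L_pos g_lip, of "x k"] y_step unfolding D_def by simp
  have cc: "f a \<ge> f b + g b \<bullet> (a - b) + D (g a - g b) / (2 * L)" for a b
    using coco[OF Q_sym Q_pd f_convex f_grad L_pos g_lip] unfolding D_def by blast
  have g0: "g xs = 0"
  proof -
    have "f xs \<le> f (xs - (1 / L) *\<^sub>R (?P *v g xs))" using xs_min by blast
    also have "\<dots> \<le> f xs - D (g xs) / (2 * L)"
      using descent_step[OF Q_sym Q_pd f_grad L_pos g_lip, of xs] unfolding D_def by simp
    finally have "D (g xs) / (2 * L) \<le> 0" by simp
    then have "D (g xs) \<le> 0" using L_pos by (simp add: divide_le_0_iff)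
    then show ?thesis using P_zero[OF Q_sym Q_pd] unfolding D_def by blast
  qed
  have Snn: "S k \<ge> 0" for k
    using desc[of k] xs_min unfolding S_def by (smt (verit))
  have F1: "f xs \<ge> f (x k) - g (x k) \<bullet> (x k - xs) + D (g (x k)) / (2 * L)" for k
    using cc[where a=xs and b="x k"] g0 Dneg by (simp add: inner_diff_right)
  have zs: "c * N (z (Suc k) - xs) = c * N (z k - xs) - \<theta> k * (g (x k) \<bullet> (z k - xs)) + t * (\<theta> k)\<^sup>2 * D (g (x k)) / L" for k
  proof -
    have e: "z (Suc k) - xs = (z k - xs) - (2 * t * \<theta> k / L) *\<^sub>R (?P *v g (x k))"
      using z_step by simp
    have "N (z (Suc k) - xs) = N (z k - xs) - 2 * (2 * t * \<theta> k / L) * (g (x k) \<bullet> (z k - xs)) + (2 * t * \<theta> k / L)\<^sup>2 * D (g (x k))"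
      unfolding N_def D_def e N_exp[OF Q_sym Q_pd] by (rule refl)
    then show ?thesis unfolding c_def using L_pos t_pos by (simp add: field_simps power2_eq_square)
  qed
  have inv: "(\<theta> k)\<^sup>2 * S k + c * N (z (Suc k) - xs) \<le> c * R" for k
  proof (induction k)
    case 0
    have "(\<theta> 0)\<^sup>2 * S 0 + c * N (z (Suc 0) - xs) = S 0 + c * R - g (x 0) \<bullet> (x 0 - xs) + t * D (g (x 0)) / L"
      using zs[of 0] \<theta>_0 z_0 unfolding R_def by simp
    also have "\<dots> \<le> c * R"
    proof -
      have h1: "D (g (x 0)) / L = 2 * (D (g (x 0)) / (2 * L))" using L_pos by simp
      have "(t - 1) * (D (g (x 0)) / L) \<le> 0" using t_le Dnn L_pos by (intro mult_nonpos_nonneg) auto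
      moreover have "(t - 1) * (D (g (x 0)) / L) = t * D (g (x 0)) / L - D (g (x 0)) / L"
        by (simp add: algebra_simps diff_divide_distrib)
      ultimately show ?thesis using F1[of 0] h1 unfolding S_def by linarith
    qed
    finally show ?case .
  next
    case (Suc m)
    let ?th = "\<theta> (Suc m)"
    have thp: "?th > 0" using \<theta>_pos by blast
    have th1: "?th \<ge> 1"
    proof -
      have "?th * (?th - 1) \<ge> 0" using \<theta>_rec[rule_format, of m] by (simp add: algebra_simps power2_eq_square)
      then show ?thesis using thp by (simp add: zero_le_mult_iff)
    qed
    have zx: "z (Suc m) = ?th *\<^sub>R x (Suc m) - (?th - 1) *\<^sub>R y (Suc m)"
    proof -
      have "?th *\<^sub>R x (Suc m) = (?th * (1 - 1 / ?th)) *\<^sub>R y (Suc m) + (?th * (1 / ?th)) *\<^sub>R z (Suc m)"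
        using x_step by (simp add: scaleR_add_right)
      also have "\<dots> = (?th - 1) *\<^sub>R y (Suc m) + z (Suc m)" using thp by (simp add: algebra_simps)
      finally show ?thesis by simp
    qed
    let ?g = "g (x (Suc m))" and ?g' = "g (x m)"
    have ydef: "y (Suc m) = x m - (1 / L) *\<^sub>R (?P *v ?g')" using y_step by simp
    have gz: "?g \<bullet> (z (Suc m) - xs) = ?g \<bullet> (x (Suc m) - xs) + (?th - 1) * (- (?g \<bullet> (x m - x (Suc m))) + (?g \<bullet> (?P *v ?g')) / L)"
      unfolding zx ydef by (simp add: inner_diff_right inner_add_right algebra_simps diff_divide_distrib)
    have Dd: "D (?g' - ?g) = D ?g' - 2 * (?g \<bullet> (?P *v ?g')) + D ?g"
      unfolding D_def using P_sym_dot[OF Q_sym Q_pd, of ?g ?g']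
      by (simp add: inner_diff_left inner_diff_right mv_neg matrix_vector_mult_diff_distrib)
    have F2: "f (x m) \<ge> f (x (Suc m)) + ?g \<bullet> (x m - x (Suc m)) + (D ?g' - 2 * (?g \<bullet> (?P *v ?g')) + D ?g) / (2 * L)"
      using cc[where a="x m" and b="x (Suc m)"] Dd by simp
    show ?case
      unfolding zs[of "Suc m"] gz
      using arith_step[OF L_pos t_pos t_le th1, of "\<theta> m" "f (x m)" "f xs" "D ?g'" "D ?g" "f (x (Suc m))"
          "?g \<bullet> (x (Suc m) - xs)" "?g \<bullet> (x m - x (Suc m))" "?g \<bullet> (?P *v ?g')" "N (z (Suc m) - xs)" R]
        \<theta>_rec Snn[of m] Dnn F1[of "Suc m"] F2 Suc.IH
      unfolding S_def c_def by simp
  qed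
  show ?thesis
  proof (intro allI impI)
    fix k :: nat assume "k \<ge> 1"
    then obtain m where k: "k = Suc m" by (cases k) auto
    have thp: "(\<theta> m)\<^sup>2 > 0" using \<theta>_pos[rule_format, of m] by simp
    have Nnn: "N v \<ge> 0" for v unfolding N_def by (rule Q_nonneg[OF Q_pd])
    have cnn: "c \<ge> 0" unfolding c_def using L_pos t_pos by simp
    have "(\<theta> m)\<^sup>2 * S m \<le> c * R" using inv[of m] Nnn[of "z (Suc m) - xs"] cnn
      by (smt (verit) mult_nonneg_nonneg)
    then have "S m \<le> c * R / (\<theta> m)\<^sup>2" using thp by (simp add: field_simps)
    moreover have "f (y k) - f xs \<le> S m" using desc[of m] k unfolding S_def by simp
    moreover have "(qnorm Q (x 0 - xs))\<^sup>2 = R" unfolding qnorm_def R_def N_def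
      using Q_nonneg[OF Q_pd] by simp
    ultimately show "f (y k) - f xs \<le> L * (qnorm Q (x 0 - xs))\<^sup>2 / (4 * t * (\<theta> (k - 1))\<^sup>2)"
      unfolding c_def k by simp
  qed
qed

end
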